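(* Let $d\ge1$ and let $\mathfrak{T}:\mathcal{S}(\mathbb{R}^{2d})\to\mathcal{S}'(\mathbb{R}^{2d})$ be a non-zero continuous linear operator such that there is a function $\Phi:\mathbb{R}^{4d}\to\mathbb{R}^{4d}$ with $\mathfrak{T}\rho(\lambda)F=c\,\rho(\Phi(\lambda))\mathfrak{T}F$ for all $\lambda\in\mathbb{R}^{4d}$, $F\in\mathcal{S}(\mathbb{R}^{2d})$ (with constants $c\in\mathbb{C}$ possibly depending on $\lambda$). Let $$H=\{\nu\in\mathbb{R}^{4d}:\ \exists\, c_\nu\in\mathbb{C}\text{ with }\rho(\nu)\mathfrak{T}F=c_\nu\mathfrak{T}F\text{ for all }F\in\mathcal{S}(\mathbb{R}^{2d})\}.$$ Then $H$ is a closed subgroup of $\mathbb{R}^{4d}$.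
   Context: For $x,\omega,t\in\mathbb{R}^{2d}$: $T_xF(t)=F(t-x)$, $M_\omega F(t)=e^{2\pi i\omega\cdot t}F(t)$, and for $(x,\omega)\in\mathbb{R}^{4d}$, $\rho(x,\omega)=T_{x/2}M_\omega T_{x/2}$, acting on $\mathcal{S}(\mathbb{R}^{2d})$ and by duality on $\mathcal{S}'(\mathbb{R}^{2d})$. Continuity of $\mathfrak{T}$ is from the Schwartz topology to the weak* topology. *)

theory Defs
  imports "HOL-Analysis.Analysis"
begin

text \<open>Functions on R^{2d} are modelled as maps real^'n => complex with CARD('n) = 2d.\<close>

definition pd :: "'n::finite \<Rightarrow> (real^'n \<Rightarrow> complex) \<Rightarrow> real^'n \<Rightarrow> complex" where
  "pd i f x = vector_derivative (\<lambda>s. f (x + s *\<^sub>R axis i 1)) (at 0)"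

fun pdl :: "'n::finite list \<Rightarrow> (real^'n \<Rightarrow> complex) \<Rightarrow> real^'n \<Rightarrow> complex" where
  "pdl [] f = f"
| "pdl (i # is) f = pd i (pdl is f)"

definition smooth_fun :: "(real^'n::finite \<Rightarrow> complex) \<Rightarrow> bool" where
  "smooth_fun f \<longleftrightarrow>
     (\<forall>is. continuous_on UNIV (pdl is f)) \<and>
     (\<forall>is i x. ((\<lambda>s. pdl is f (x + s *\<^sub>R axis i 1)) has_vector_derivative pdl (i # is) f x) (at 0))"

definition schwartz :: "(real^'n::finite \<Rightarrow> complex) set" where
  "schwartz = {f. smooth_fun f \<and>
     (\<forall>(N::nat) is. \<exists>C. \<forall>x. (1 + norm x) ^ N * norm (pdl is f x) \<le> C)}"

definition sch_seminorm :: "nat \<Rightarrow> (real^'n::finite \<Rightarrow> complex) \<Rightarrow> real" where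
  "sch_seminorm N f = (SUP x. (1 + norm x) ^ N * (\<Sum>is\<in>{is::'n list. length is \<le> N}. norm (pdl is f x)))"

definition lin_on_schwartz :: "((real^'n::finite \<Rightarrow> complex) \<Rightarrow> complex) \<Rightarrow> bool" where
  "lin_on_schwartz u \<longleftrightarrow> (\<forall>f\<in>schwartz. \<forall>g\<in>schwartz. \<forall>a b.
      u (\<lambda>x. a * f x + b * g x) = a * u f + b * u g)"

definition cont_on_schwartz :: "((real^'n::finite \<Rightarrow> complex) \<Rightarrow> complex) \<Rightarrow> bool" where
  "cont_on_schwartz u \<longleftrightarrow> (\<exists>C N. \<forall>f\<in>schwartz. norm (u f) \<le> C * sch_seminorm N f)"

definition tempered :: "((real^'n::finite \<Rightarrow> complex) \<Rightarrow> complex) \<Rightarrow> bool" where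
  "tempered u \<longleftrightarrow> lin_on_schwartz u \<and> cont_on_schwartz u"

text \<open>Continuous linear T : S -> S' (weak* topology): each T F is tempered, T is linear,
  and F |-> <T F, phi> is continuous on S for every phi in S.\<close>
definition cont_lin_op :: "((real^'n::finite \<Rightarrow> complex) \<Rightarrow> ((real^'n \<Rightarrow> complex) \<Rightarrow> complex)) \<Rightarrow> bool" where
  "cont_lin_op T \<longleftrightarrow>
     (\<forall>F\<in>schwartz. tempered (T F)) \<and>
     (\<forall>F\<in>schwartz. \<forall>G\<in>schwartz. \<forall>a b. \<forall>\<phi>\<in>schwartz.
        T (\<lambda>x. a * F x + b * G x) \<phi> = a * T F \<phi> + b * T G \<phi>) \<and>
     (\<forall>\<phi>\<in>schwartz. cont_on_schwartz (\<lambda>F. T F \<phi>))"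

definition transl :: "real^'n::finite \<Rightarrow> (real^'n \<Rightarrow> complex) \<Rightarrow> real^'n \<Rightarrow> complex" where
  "transl x F t = F (t - x)"

definition modul :: "real^'n::finite \<Rightarrow> (real^'n \<Rightarrow> complex) \<Rightarrow> real^'n \<Rightarrow> complex" where
  "modul w F t = exp (2 * of_real pi * \<i> * of_real (w \<bullet> t)) * F t"

definition rho :: "(real^'n::finite) \<times> (real^'n) \<Rightarrow> (real^'n \<Rightarrow> complex) \<Rightarrow> real^'n \<Rightarrow> complex" where
  "rho p F = transl ((1/2) *\<^sub>R fst p) (modul (snd p) (transl ((1/2) *\<^sub>R fst p) F))"

text \<open>Action on S' by duality (bilinear pairing): the transpose of rho(x,w) is rho(-x,w).\<close>
definition rho_dist :: "(real^'n::finite) \<times> (real^'n) \<Rightarrow> ((real^'n \<Rightarrow> complex) \<Rightarrow> complex)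
     \<Rightarrow> ((real^'n \<Rightarrow> complex) \<Rightarrow> complex)" where
  "rho_dist p u = (\<lambda>\<phi>. u (rho (- fst p, snd p) \<phi>))"

end

theory Submission
  imports Defs
begin


lemma pdl_append: "pdl (js @ is) f = pdl js (pdl is f)"
  by (induction js) auto

definition axd :: "(real^'n::finite \<Rightarrow> complex) \<Rightarrow> real^'n \<Rightarrow> 'n \<Rightarrow> complex \<Rightarrow> bool" where
  "axd f x i D \<longleftrightarrow> ((\<lambda>s. f (x + s *\<^sub>R axis i 1)) has_vector_derivative D) (at 0)"

lemma pd_eq: "axd f x i D \<Longrightarrow> pd i f x = D"
  unfolding axd_def pd_def by (rule vector_derivative_at)

lemma smooth_axd: "smooth_fun f \<Longrightarrow> axd (pdl is f) x i (pdl (i # is) f x)"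
  unfolding smooth_fun_def axd_def by blast

lemma smooth_cont: "smooth_fun f \<Longrightarrow> continuous_on UNIV (pdl is f)"
  unfolding smooth_fun_def by blast

lemma smooth_axd0: "smooth_fun f \<Longrightarrow> axd f x i (pd i f x)"
  using smooth_axd[of f "[]"] by simp

lemma smooth_funI:
  assumes "\<And>is. continuous_on UNIV (pdl is f)" "\<And>is i x. axd (pdl is f) x i (pdl (i # is) f x)"
  shows "smooth_fun f"
  using assms unfolding smooth_fun_def axd_def by blast

lemma smooth_pdl: "smooth_fun f \<Longrightarrow> smooth_fun (pdl js f)"
  apply (rule smooth_funI)
  apply (simp add: pdl_append[symmetric] smooth_cont)
  by (metis append_Cons pdl_append smooth_axd)

lemma axd_lin:
  assumes "axd f x i Df" "axd g x i Dg"
  shows "axd (\<lambda>x. a * f x + b * g x) x i (a * Df + b * Dg)"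
  using assms unfolding axd_def by (auto intro!: derivative_eq_intros)

lemma pdl_lin:
  assumes "smooth_fun f" "smooth_fun g"
  shows "pdl is (\<lambda>x. a * f x + b * g x) = (\<lambda>x. a * pdl is f x + b * pdl is g x)"
proof (induction "is")
  case Nil then show ?case by simp
next
  case (Cons i "is")
  show ?case
  proof
    fix x
    have "pd i (\<lambda>x. a * pdl is f x + b * pdl is g x) x = a * pdl (i # is) f x + b * pdl (i # is) g x"
      by (rule pd_eq, rule axd_lin, rule smooth_axd[OF assms(1)], rule smooth_axd[OF assms(2)])
    then show "pdl (i # is) (\<lambda>x. a * f x + b * g x) x = a * pdl (i # is) f x + b * pdl (i # is) g x"
      by (simp add: Cons.IH)
  qed
qed

lemma smooth_lin:
  assumes "smooth_fun f" "smooth_fun g"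
  shows "smooth_fun (\<lambda>x. a * f x + b * g x)"
proof (rule smooth_funI)
  fix "is"
  show "continuous_on UNIV (pdl is (\<lambda>x. a * f x + b * g x))"
    unfolding pdl_lin[OF assms]
    using smooth_cont[OF assms(1)] smooth_cont[OF assms(2)]
    by (intro continuous_intros) auto
next
  fix "is" i x
  show "axd (pdl is (\<lambda>x. a * f x + b * g x)) x i (pdl (i # is) (\<lambda>x. a * f x + b * g x) x)"
    unfolding pdl_lin[OF assms]
    by (rule axd_lin, rule smooth_axd[OF assms(1)], rule smooth_axd[OF assms(2)])
qed

definition rapid :: "(real^'n::finite \<Rightarrow> complex) \<Rightarrow> bool" where
  "rapid g \<longleftrightarrow> (\<forall>N::nat. \<exists>C. \<forall>x. (1 + norm x) ^ N * norm (g x) \<le> C)"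

lemma schwartz_iff: "f \<in> schwartz \<longleftrightarrow> smooth_fun f \<and> (\<forall>is. rapid (pdl is f))"
  unfolding schwartz_def rapid_def by blast

lemma rapid_lin:
  fixes f g :: "real^'n::finite \<Rightarrow> complex"
  assumes "rapid f" "rapid g"
  shows "rapid (\<lambda>x. a * f x + b * g x)"
  unfolding rapid_def
proof
  fix N :: nat
  obtain C1 where C1: "\<And>x. (1 + norm x) ^ N * norm (f x) \<le> C1" using assms(1) unfolding rapid_def by blast
  obtain C2 where C2: "\<And>x. (1 + norm x) ^ N * norm (g x) \<le> C2" using assms(2) unfolding rapid_def by blast
  show "\<exists>C. \<forall>x. (1 + norm x) ^ N * norm (a * f x + b * g x) \<le> C"
  proof (intro exI allI)
    fix x :: "real^'n"
    have w: "0 \<le> (1 + norm x) ^ N" by simp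
    have "(1 + norm x) ^ N * norm (a * f x + b * g x) \<le> (1 + norm x) ^ N * (norm a * norm (f x) + norm b * norm (g x))"
      by (rule mult_left_mono[OF _ w]) (metis norm_mult norm_triangle_ineq)
    also have "\<dots> = norm a * ((1 + norm x) ^ N * norm (f x)) + norm b * ((1 + norm x) ^ N * norm (g x))"
      by (simp add: algebra_simps)
    also have "\<dots> \<le> norm a * C1 + norm b * C2"
      by (intro add_mono mult_left_mono C1 C2 norm_ge_zero)
    finally show "(1 + norm x) ^ N * norm (a * f x + b * g x) \<le> norm a * C1 + norm b * C2" .
  qed
qed

lemma schwartz_lin:
  assumes "f \<in> schwartz" "g \<in> schwartz"
  shows "(\<lambda>x. a * f x + b * g x) \<in> schwartz"
  using assms unfolding schwartz_iff
  by (auto simp: pdl_lin smooth_lin rapid_lin)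

lemma schwartz_pdl: "f \<in> schwartz \<Longrightarrow> pdl js f \<in> schwartz"
  unfolding schwartz_iff by (auto simp: smooth_pdl pdl_append[symmetric])



definition cw :: "real^'n::finite \<Rightarrow> 'n \<Rightarrow> complex" where
  "cw w i = 2 * complex_of_real pi * \<i> * complex_of_real (w $ i)"

definition Dw :: "real^'n::finite \<Rightarrow> 'n \<Rightarrow> (real^'n \<Rightarrow> complex) \<Rightarrow> real^'n \<Rightarrow> complex" where
  "Dw w i g = (\<lambda>z. 1 * pdl [i] g z + cw w i * g z)"

fun pdlw :: "real^'n::finite \<Rightarrow> 'n list \<Rightarrow> (real^'n \<Rightarrow> complex) \<Rightarrow> real^'n \<Rightarrow> complex" where
  "pdlw w [] g = g"
| "pdlw w (i # is) g = Dw w i (pdlw w is g)"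

lemma schwartz_Dw: "g \<in> schwartz \<Longrightarrow> Dw w i g \<in> schwartz"
  unfolding Dw_def by (intro schwartz_lin schwartz_pdl)

lemma schwartz_pdlw: "g \<in> schwartz \<Longrightarrow> pdlw w is g \<in> schwartz"
  by (induction "is") (auto intro: schwartz_Dw)

definition E :: "real^'n::finite \<Rightarrow> real^'n \<Rightarrow> real^'n \<Rightarrow> complex" where
  "E x w t = exp (2 * complex_of_real pi * \<i> * complex_of_real (w \<bullet> (t - (1/2) *\<^sub>R x)))"

lemma norm_E [simp]: "norm (E x w t) = 1"
  unfolding E_def by (simp add: norm_exp_eq_Re)

lemma rho_eq: "rho (x, w) F t = E x w t * F (t - x)"
proof -
  have "t - (1/2) *\<^sub>R x - (1/2) *\<^sub>R x = t - x"
    by (simp add: algebra_simps scaleR_2[symmetric])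
  then show ?thesis unfolding rho_def transl_def modul_def E_def by simp
qed

lemma rho_eq': "rho p F t = E (fst p) (snd p) t * F (t - fst p)"
  using rho_eq[of "fst p" "snd p"] by simp

lemma axd_rho:
  assumes "axd g (t - x) i D"
  shows "axd (rho (x, w) g) t i (E x w t * (D + cw w i * g (t - x)))"
proof -
  define a where "a = 2 * complex_of_real pi * \<i> * complex_of_real (w \<bullet> (t - (1/2) *\<^sub>R x))"
  define b where "b = cw w i"
  have wa: "w \<bullet> axis i 1 = w $ i" by (metis cart_eq_inner_axis)
  have Eeq: "E x w (t + s *\<^sub>R axis i 1) = exp (a + complex_of_real s * b)" for s
  proof -
    have "w \<bullet> (t + s *\<^sub>R axis i 1 - (1/2) *\<^sub>R x) = w \<bullet> (t - (1/2) *\<^sub>R x) + s * w $ i"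
      by (simp add: inner_diff_right inner_add_right wa algebra_simps)
    then show ?thesis unfolding E_def a_def b_def cw_def by (simp add: algebra_simps wa)
  qed
  have feq: "(\<lambda>s. rho (x, w) g (t + s *\<^sub>R axis i 1)) =
      (\<lambda>s. exp (a + complex_of_real s * b) * g ((t - x) + s *\<^sub>R axis i 1))"
    by (rule ext) (simp add: rho_eq Eeq algebra_simps)
  have d1: "((\<lambda>z. exp (a + z * b)) has_field_derivative exp a * b) (at (of_real 0))"
    by (auto intro!: derivative_eq_intros)
  have d1': "((\<lambda>s. exp (a + complex_of_real s * b)) has_vector_derivative exp a * b) (at 0)"
    using has_vector_derivative_real_field[OF d1] by simp
  have d2: "((\<lambda>s. g ((t - x) + s *\<^sub>R axis i 1)) has_vector_derivative D) (at 0)"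
    using assms unfolding axd_def .
  have "((\<lambda>s. exp (a + complex_of_real s * b) * g ((t - x) + s *\<^sub>R axis i 1)) has_vector_derivative
      (exp (a + complex_of_real 0 * b) * D + exp a * b * g ((t - x) + 0 *\<^sub>R axis i 1))) (at 0)"
    by (rule has_vector_derivative_mult[OF d1' d2])
  moreover have "E x w t = exp a" using Eeq[of 0] by simp
  ultimately show ?thesis unfolding axd_def feq b_def by (simp add: algebra_simps)
qed

lemma pdl_rho:
  assumes "g \<in> schwartz"
  shows "pdl is (rho (x, w) g) = rho (x, w) (pdlw w is g)"
proof (induction "is")
  case Nil then show ?case by simp
next
  case (Cons i "is")
  have S: "pdlw w is g \<in> schwartz" by (rule schwartz_pdlw[OF assms])
  then have sm: "smooth_fun (pdlw w is g)" by (simp add: schwartz_iff)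
  show ?case
  proof
    fix t
    have "pd i (rho (x, w) (pdlw w is g)) t = rho (x, w) (pdlw w (i # is) g) t"
      apply (rule pd_eq)
      using axd_rho[OF smooth_axd0[OF sm, of "t - x" i], of w]
      by (simp add: rho_eq Dw_def)
    then show "pdl (i # is) (rho (x, w) g) t = rho (x, w) (pdlw w (i # is) g) t"
      by (simp add: Cons.IH)
  qed
qed

lemma weight_ineq:
  fixes a b :: "'a::real_normed_vector"
  shows "(1 + norm (a + b)) ^ N \<le> (1 + norm a) ^ N * (1 + norm b) ^ N"
proof -
  have "1 + norm (a + b) \<le> (1 + norm a) * (1 + norm b)"
  proof -
    have "0 \<le> norm a * norm b" by simp
    then have "1 + norm (a + b) \<le> 1 + norm a + norm b + norm a * norm b"
      using norm_triangle_ineq[of a b] by linarith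
    then show ?thesis by (simp add: algebra_simps)
  qed
  then have "(1 + norm (a + b)) ^ N \<le> ((1 + norm a) * (1 + norm b)) ^ N"
    by (intro power_mono) auto
  then show ?thesis by (simp add: power_mult_distrib)
qed

lemma weight_shift:
  fixes t x :: "'a::real_normed_vector"
  shows "(1 + norm t) ^ N \<le> (1 + norm x) ^ N * (1 + norm (t - x)) ^ N"
  using weight_ineq[of x "t - x" N] by simp

lemma rapid_shift:
  fixes h :: "real^'n::finite \<Rightarrow> complex"
  assumes "rapid h" "\<And>t. norm (c t) = 1"
  shows "rapid (\<lambda>t. c t * h (t - x))"
  unfolding rapid_def
proof
  fix N :: nat
  obtain C where C: "\<And>y. (1 + norm y) ^ N * norm (h y) \<le> C" using assms(1) unfolding rapid_def by blast
  show "\<exists>C. \<forall>t. (1 + norm t) ^ N * norm (c t * h (t - x)) \<le> C"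
  proof (intro exI allI)
    fix t :: "real^'n"
    have "(1 + norm t) ^ N * norm (c t * h (t - x)) = (1 + norm t) ^ N * norm (h (t - x))"
      by (simp add: norm_mult assms(2))
    also have "\<dots> \<le> ((1 + norm x) ^ N * (1 + norm (t - x)) ^ N) * norm (h (t - x))"
      by (intro mult_right_mono weight_shift) auto
    also have "\<dots> = (1 + norm x) ^ N * ((1 + norm (t - x)) ^ N * norm (h (t - x)))" by simp
    also have "\<dots> \<le> (1 + norm x) ^ N * C" by (intro mult_left_mono C) auto
    finally show "(1 + norm t) ^ N * norm (c t * h (t - x)) \<le> (1 + norm x) ^ N * C" .
  qed
qed

lemma cont_E: "continuous_on UNIV (E x w)"
  unfolding E_def by (intro continuous_intros)

lemma rho_schwartz:
  assumes "g \<in> schwartz"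
  shows "rho p g \<in> schwartz"
proof -
  obtain x w where p: "p = (x, w)" by (cases p)
  have S: "pdlw w is g \<in> schwartz" for "is" by (rule schwartz_pdlw[OF assms])
  show ?thesis unfolding schwartz_iff p
  proof (intro conjI allI smooth_funI)
    fix "is"
    have c: "continuous_on UNIV (pdlw w is g)"
      using smooth_cont[of "pdlw w is g" "[]"] S by (simp add: schwartz_iff)
    have "continuous_on UNIV (\<lambda>t. E x w t * pdlw w is g (t - x))"
      by (intro continuous_intros cont_E continuous_on_compose2[OF c]) auto
    then show "continuous_on UNIV (pdl is (rho (x, w) g))"
      unfolding pdl_rho[OF assms] by (simp add: rho_eq[abs_def])
  next
    fix "is" i t
    have sm: "smooth_fun (pdlw w is g)" using S by (simp add: schwartz_iff)
    show "axd (pdl is (rho (x, w) g)) t i (pdl (i # is) (rho (x, w) g) t)"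
      unfolding pdl_rho[OF assms]
      using axd_rho[OF smooth_axd0[OF sm, of "t - x" i], of w]
      by (simp add: rho_eq Dw_def)
  next
    fix "is"
    have r: "rapid (pdlw w is g)" using S[of "is"] schwartz_iff[of "pdlw w is g"] pdl.simps(1) by metis
    show "rapid (pdl is (rho (x, w) g))"
      unfolding pdl_rho[OF assms] using rapid_shift[OF r, of "E x w" x]
      by (simp add: rho_eq[abs_def])
  qed
qed

lemma rho_zero: "rho 0 g = g"
  by (rule ext) (simp add: rho_eq' E_def zero_prod_def)

lemma rho_comp:
  "rho (x, w) (rho (y, v) g) t =
     exp (2 * complex_of_real pi * \<i> * complex_of_real ((w \<bullet> y - v \<bullet> x) / 2)) * rho (x + y, w + v) g t"
proof -
  have r: "w \<bullet> (t - (1/2) *\<^sub>R x) + v \<bullet> (t - x - (1/2) *\<^sub>R y) =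
      (w \<bullet> y - v \<bullet> x) / 2 + (w + v) \<bullet> (t - (1/2) *\<^sub>R (x + y))"
    by (simp add: inner_diff_right inner_add_right inner_add_left inner_commute algebra_simps divide_simps)
  have "E x w t * E y v (t - x) = exp (2 * complex_of_real pi * \<i> * complex_of_real ((w \<bullet> y - v \<bullet> x) / 2)) * E (x + y) (w + v) t"
    unfolding E_def exp_add[symmetric]
    using arg_cong[OF r, of "\<lambda>r. exp (2 * complex_of_real pi * \<i> * complex_of_real r)"]
    by (simp add: algebra_simps)
  then show ?thesis by (simp add: rho_eq algebra_simps diff_diff_add)
qed



lemma mvt1:
  fixes f :: "real \<Rightarrow> complex"
  assumes d: "\<And>\<tau>. \<tau> \<in> closed_segment 0 c \<Longrightarrow> (f has_vector_derivative f' \<tau>) (at \<tau>)"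
    and b: "\<And>\<tau>. \<tau> \<in> closed_segment 0 c \<Longrightarrow> norm (f' \<tau>) \<le> B"
  shows "norm (f c - f 0) \<le> B * \<bar>c\<bar>"
proof -
  have "norm (f c - f 0) \<le> B * norm (c - 0)"
  proof (rule differentiable_bound[where f' = "\<lambda>\<tau> h. h *\<^sub>R f' \<tau>"])
    fix \<tau> assume "\<tau> \<in> closed_segment 0 c"
    then show "(f has_derivative (\<lambda>h. h *\<^sub>R f' \<tau>)) (at \<tau> within closed_segment 0 c)"
      using d has_vector_derivative_at_within unfolding has_vector_derivative_def by blast
  next
    fix \<tau> assume t: "\<tau> \<in> closed_segment 0 c"
    have "onorm (\<lambda>h::real. h *\<^sub>R f' \<tau>) = onorm (\<lambda>h::real. h) * norm (f' \<tau>)"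
      by (rule onorm_scaleR_left) (rule bounded_linear_ident)
    also have "\<dots> = norm (f' \<tau>)" by (simp add: onorm_id)
    finally show "onorm (\<lambda>h::real. h *\<^sub>R f' \<tau>) \<le> B" using b[OF t] by simp
  qed auto
  then show ?thesis by simp
qed

lemma exp_i_diff: "norm (exp (\<i> * complex_of_real a) - exp (\<i> * complex_of_real b)) \<le> \<bar>a - b\<bar>"
proof -
  define f where "f \<tau> = exp (\<i> * complex_of_real (b + \<tau>))" for \<tau>
  have "norm (f (a - b) - f 0) \<le> 1 * \<bar>a - b\<bar>"
  proof (rule mvt1[where f' = "\<lambda>\<tau>. \<i> * f \<tau>"])
    fix \<tau> :: real
    show "(f has_vector_derivative \<i> * f \<tau>) (at \<tau>)"
    proof -
      have "((\<lambda>z. exp (\<i> * (complex_of_real b + z))) has_field_derivative exp (\<i> * (complex_of_real b + of_real \<tau>)) * \<i>) (at (of_real \<tau>))"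
        by (auto intro!: derivative_eq_intros)
      from has_vector_derivative_real_field[OF this, of UNIV] show ?thesis
        unfolding f_def by (simp add: algebra_simps)
    qed
    show "norm (\<i> * f \<tau>) \<le> 1" unfolding f_def by (simp add: norm_mult norm_exp_eq_Re)
  qed
  then show ?thesis unfolding f_def by simp
qed

lemma E_diff: "norm (E x w t - E x0 w0 t) \<le> 2 * pi * \<bar>w \<bullet> (t - (1/2) *\<^sub>R x) - w0 \<bullet> (t - (1/2) *\<^sub>R x0)\<bar>"
proof -
  have e: "E x w t = exp (\<i> * complex_of_real (2 * pi * (w \<bullet> (t - (1/2) *\<^sub>R x))))" for x w
    unfolding E_def by (simp add: algebra_simps)
  define r1 where "r1 = w \<bullet> (t - (1/2) *\<^sub>R x)"
  define r2 where "r2 = w0 \<bullet> (t - (1/2) *\<^sub>R x0)"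
  have "norm (E x w t - E x0 w0 t) \<le> \<bar>2 * pi * r1 - 2 * pi * r2\<bar>"
    unfolding e r1_def r2_def by (rule exp_i_diff)
  also have "\<bar>2 * pi * r1 - 2 * pi * r2\<bar> = 2 * pi * \<bar>r1 - r2\<bar>"
    by (simp add: right_diff_distrib[symmetric] abs_mult)
  finally show ?thesis unfolding r1_def r2_def .
qed

lemma axd_shift:
  assumes "\<And>\<tau>. axd h (p + \<tau> *\<^sub>R axis k 1) k (D \<tau>)"
  shows "((\<lambda>\<tau>. h (p + \<tau> *\<^sub>R axis k 1)) has_vector_derivative D \<tau>) (at \<tau>)"
proof -
  have a: "((\<lambda>\<tau>'. \<tau>' - \<tau>) has_vector_derivative 1) (at \<tau>)"
    by (auto intro!: derivative_eq_intros)
  have b: "((\<lambda>\<sigma>. h ((p + \<tau> *\<^sub>R axis k 1) + \<sigma> *\<^sub>R axis k 1)) has_vector_derivative D \<tau>) (at ((\<lambda>\<tau>'. \<tau>' - \<tau>) \<tau>))"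
    using assms[of \<tau>] unfolding axd_def by simp
  have "(((\<lambda>\<sigma>. h ((p + \<tau> *\<^sub>R axis k 1) + \<sigma> *\<^sub>R axis k 1)) \<circ> (\<lambda>\<tau>'. \<tau>' - \<tau>)) has_vector_derivative 1 *\<^sub>R D \<tau>) (at \<tau>)"
    by (rule vector_diff_chain_at[OF a b])
  moreover have "((\<lambda>\<sigma>. h ((p + \<tau> *\<^sub>R axis k 1) + \<sigma> *\<^sub>R axis k 1)) \<circ> (\<lambda>\<tau>'. \<tau>' - \<tau>)) = (\<lambda>\<tau>. h (p + \<tau> *\<^sub>R axis k 1))"
    by (rule ext) (simp add: algebra_simps)
  ultimately show ?thesis by simp
qed


lemma sum_axis_expansion: "(\<Sum>j\<in>UNIV. (y $ j) *\<^sub>R axis j (1::real)) = (y::real^'n::finite)"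
  using basis_expansion[of y] by (simp add: scalar_mult_eq_scaleR)

lemma path_bound:
  fixes h :: "real^'n::finite \<Rightarrow> complex"
  assumes sm: "smooth_fun h"
    and M: "\<And>k z. norm (z - s) \<le> R \<Longrightarrow> norm (pd k h z) \<le> M"
    and R: "(\<Sum>j\<in>UNIV. \<bar>y $ j\<bar>) \<le> R"
  shows "norm (h (s - y) - h s) \<le> M * (\<Sum>j\<in>UNIV. \<bar>y $ j\<bar>)"
proof -
  have main: "K \<subseteq> UNIV \<Longrightarrow> norm (h (s - (\<Sum>j\<in>K. (y $ j) *\<^sub>R axis j 1)) - h s) \<le> M * (\<Sum>j\<in>K. \<bar>y $ j\<bar>)"
    if "finite K" for K :: "'n set"
  using that proof (induction K rule: finite_induct)
    case empty then show ?case by simp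
  next
    case (insert k K)
    define P where "P = s - (\<Sum>j\<in>K. (y $ j) *\<^sub>R axis j 1)"
    define f where "f \<tau> = h (P + \<tau> *\<^sub>R axis k 1)" for \<tau>
    have sK: "(\<Sum>j\<in>K. \<bar>y $ j\<bar>) + \<bar>y $ k\<bar> \<le> R"
    proof -
      have "(\<Sum>j\<in>K. \<bar>y $ j\<bar>) + \<bar>y $ k\<bar> = (\<Sum>j\<in>insert k K. \<bar>y $ j\<bar>)"
        using insert by simp
      also have "\<dots> \<le> (\<Sum>j\<in>UNIV. \<bar>y $ j\<bar>)" by (rule sum_mono2) auto
      finally show ?thesis using R by simp
    qed
    have nK: "norm (\<Sum>j\<in>K. (y $ j) *\<^sub>R axis j (1::real)) \<le> (\<Sum>j\<in>K. \<bar>y $ j\<bar>)"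
      by (rule order_trans[OF norm_sum]) simp
    have "norm (f (- (y $ k)) - f 0) \<le> M * \<bar>- (y $ k)\<bar>"
    proof (rule mvt1[where f' = "\<lambda>\<tau>. pd k h (P + \<tau> *\<^sub>R axis k 1)"])
      fix \<tau> :: real
      show "(f has_vector_derivative pd k h (P + \<tau> *\<^sub>R axis k 1)) (at \<tau>)"
        unfolding f_def by (rule axd_shift) (rule smooth_axd0[OF sm])
    next
      fix \<tau> :: real assume "\<tau> \<in> closed_segment 0 (- (y $ k))"
      then have t: "\<bar>\<tau>\<bar> \<le> \<bar>y $ k\<bar>" using segment_bound1 by fastforce
      have "norm (P + \<tau> *\<^sub>R axis k 1 - s) = norm (\<tau> *\<^sub>R axis k (1::real) - (\<Sum>j\<in>K. (y $ j) *\<^sub>R axis j 1))"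
        unfolding P_def by (simp add: algebra_simps)
      also have "\<dots> \<le> norm (\<tau> *\<^sub>R axis k (1::real)) + norm (\<Sum>j\<in>K. (y $ j) *\<^sub>R axis j (1::real))"
        by (rule norm_triangle_ineq4)
      also have "\<dots> \<le> \<bar>y $ k\<bar> + (\<Sum>j\<in>K. \<bar>y $ j\<bar>)" using t nK by simp
      finally show "norm (pd k h (P + \<tau> *\<^sub>R axis k 1)) \<le> M" using sK by (intro M) simp
    qed
    moreover have "f (- (y $ k)) = h (s - (\<Sum>j\<in>insert k K. (y $ j) *\<^sub>R axis j 1))"
      unfolding f_def P_def using insert by (simp add: algebra_simps)
    moreover have "f 0 = h P" unfolding f_def by simp
    ultimately have a: "norm (h (s - (\<Sum>j\<in>insert k K. (y $ j) *\<^sub>R axis j 1)) - h P) \<le> M * \<bar>y $ k\<bar>" by simp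
    have b: "norm (h P - h s) \<le> M * (\<Sum>j\<in>K. \<bar>y $ j\<bar>)" using insert unfolding P_def by simp
    have "norm (h (s - (\<Sum>j\<in>insert k K. (y $ j) *\<^sub>R axis j 1)) - h s) \<le>
        norm (h (s - (\<Sum>j\<in>insert k K. (y $ j) *\<^sub>R axis j 1)) - h P) + norm (h P - h s)"
      by (rule order_trans[OF _ norm_triangle_ineq]) simp
    also have "\<dots> \<le> M * \<bar>y $ k\<bar> + M * (\<Sum>j\<in>K. \<bar>y $ j\<bar>)" using a b by simp
    also have "\<dots> = M * (\<Sum>j\<in>insert k K. \<bar>y $ j\<bar>)" using insert by (simp add: algebra_simps)
    finally show ?case .
  qed
  show ?thesis using main[of UNIV] by (simp add: sum_axis_expansion)
qed


lemma rapid_bound: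
  assumes "rapid g"
  obtains C where "\<And>x. (1 + norm x) ^ N * norm (g x) \<le> C"
  using assms unfolding rapid_def by blast

lemma schwartz_rapid: "h \<in> schwartz \<Longrightarrow> rapid (pdl is h)"
  unfolding schwartz_iff by blast

lemma schwartz_rapid0: "h \<in> schwartz \<Longrightarrow> rapid h"
  using schwartz_rapid[of h "[]"] by simp

lemma sum_abs_comp: "(\<Sum>j\<in>UNIV. \<bar>y $ j\<bar>) \<le> real CARD('n) * norm (y::real^'n::finite)"
proof -
  have "(\<Sum>j\<in>UNIV. \<bar>y $ j\<bar>) \<le> (\<Sum>j\<in>(UNIV::'n set). norm y)"
    by (rule sum_mono) (rule component_le_norm_cart)
  then show ?thesis by simp
qed

lemma transl_lip:
  fixes h :: "real^'n::finite \<Rightarrow> complex"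
  assumes hS: "h \<in> schwartz"
  shows "\<exists>C. \<forall>y s. norm y \<le> 1 \<longrightarrow> (1 + norm s) ^ N * norm (h (s - y) - h s) \<le> C * norm y"
proof -
  define R where "R = real CARD('n)"
  have "\<forall>k. \<exists>C. \<forall>z. (1 + norm z) ^ N * norm (pd k h z) \<le> C"
  proof
    fix k
    have "rapid (pdl [k] h)" by (rule schwartz_rapid[OF hS])
    then show "\<exists>C. \<forall>z. (1 + norm z) ^ N * norm (pd k h z) \<le> C" unfolding rapid_def by simp
  qed
  then obtain Cf where Cf: "\<And>k z. (1 + norm z) ^ N * norm (pd k h z) \<le> Cf k" by metis
  define Bt where "Bt = (\<Sum>k\<in>UNIV. Cf k)"
  have Cf0: "0 \<le> Cf k" for k
  proof -
    have "(1 + norm (0::real^'n)) ^ N * norm (pd k h 0) \<le> Cf k" by (rule Cf)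
    moreover have "0 \<le> (1 + norm (0::real^'n)) ^ N * norm (pd k h 0)" by simp
    ultimately show ?thesis by linarith
  qed
  have CB: "Cf k \<le> Bt" for k unfolding Bt_def by (rule member_le_sum) (auto intro: Cf0)
  have Bt0: "0 \<le> Bt" using Cf0 CB order_trans by blast
  have sm: "smooth_fun h" using hS by (simp add: schwartz_iff)
  show ?thesis
  proof (intro exI allI impI)
    fix y s :: "real^'n" assume y: "norm y \<le> 1"
    have R0: "0 \<le> R" unfolding R_def by simp
    have sy: "(\<Sum>j\<in>UNIV. \<bar>y $ j\<bar>) \<le> R * norm y" unfolding R_def by (rule sum_abs_comp)
    have sy1: "(\<Sum>j\<in>UNIV. \<bar>y $ j\<bar>) \<le> R" using sy y R0 by (smt (verit) mult_left_le)
    have ws: "0 < (1 + norm s) ^ N" by (rule zero_less_power) (smt (verit) norm_ge_zero)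
    have ns: "1 + norm s \<noteq> 0" using norm_ge_zero[of s] by linarith
    define M where "M = Bt * (1 + R) ^ N / (1 + norm s) ^ N"
    have Mb: "norm (pd k h z) \<le> M" if z: "norm (z - s) \<le> R" for k z
    proof -
      have "(1 + norm s) ^ N \<le> (1 + norm z) ^ N * (1 + norm (s - z)) ^ N"
        using weight_ineq[of z "s - z" N] by simp
      also have "\<dots> \<le> (1 + norm z) ^ N * (1 + R) ^ N"
        using z by (intro mult_left_mono power_mono) (auto simp: norm_minus_commute)
      finally have w: "(1 + norm s) ^ N \<le> (1 + norm z) ^ N * (1 + R) ^ N" .
      have "norm (pd k h z) * (1 + norm s) ^ N \<le> norm (pd k h z) * ((1 + norm z) ^ N * (1 + R) ^ N)"
        by (rule mult_left_mono[OF w]) simp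
      also have "\<dots> = ((1 + norm z) ^ N * norm (pd k h z)) * (1 + R) ^ N" by simp
      also have "\<dots> \<le> Bt * (1 + R) ^ N"
        using R0 by (intro mult_right_mono order_trans[OF Cf CB]) auto
      finally show ?thesis unfolding M_def using ws by (simp add: pos_le_divide_eq)
    qed
    have "norm (h (s - y) - h s) \<le> M * (\<Sum>j\<in>UNIV. \<bar>y $ j\<bar>)"
      by (rule path_bound[OF sm Mb sy1])
    then have "(1 + norm s) ^ N * norm (h (s - y) - h s) \<le> (1 + norm s) ^ N * (M * (\<Sum>j\<in>UNIV. \<bar>y $ j\<bar>))"
      by (rule mult_left_mono) simp
    also have "\<dots> = Bt * (1 + R) ^ N * (\<Sum>j\<in>UNIV. \<bar>y $ j\<bar>)"
      unfolding M_def using ws ns by simp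
    also have "\<dots> \<le> Bt * (1 + R) ^ N * (R * norm y)"
      using sy R0 Bt0 by (intro mult_left_mono) auto
    finally show "(1 + norm s) ^ N * norm (h (s - y) - h s) \<le> (Bt * (1 + R) ^ N * R) * norm y"
      by (simp add: mult.assoc)
  qed
qed


lemma pdl_Dw:
  assumes "h \<in> schwartz"
  shows "pdl js (Dw w i h) = (\<lambda>z. 1 * pdl (js @ [i]) h z + cw w i * pdl js h z)"
proof -
  have s1: "smooth_fun (pdl [i] h)" and s2: "smooth_fun h"
    using schwartz_pdl[OF assms, of "[i]"] assms by (auto simp: schwartz_iff)
  show ?thesis unfolding Dw_def pdl_lin[OF s1 s2] by (simp add: pdl_append)
qed

lemma cw_diff: "norm (cw w i - cw w0 i) \<le> 2 * pi * norm (w - w0)"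
proof -
  have "cw w i - cw w0 i = 2 * complex_of_real pi * \<i> * complex_of_real ((w - w0) $ i)"
    unfolding cw_def by (simp add: algebra_simps)
  then have "norm (cw w i - cw w0 i) = 2 * pi * \<bar>(w - w0) $ i\<bar>"
    by (simp add: norm_mult flip: of_real_diff)
  also have "\<dots> \<le> 2 * pi * norm (w - w0)"
    by (intro mult_left_mono component_le_norm_cart) auto
  finally show ?thesis .
qed

lemma pw_lip:
  fixes g :: "real^'n::finite \<Rightarrow> complex"
  assumes gS: "g \<in> schwartz"
  shows "\<forall>js N. \<exists>C. \<forall>w t. norm (w - w0) \<le> 1 \<longrightarrow>
     (1 + norm t) ^ N * norm (pdl js (pdlw w is g) t - pdl js (pdlw w0 is g) t) \<le> C * norm (w - w0)"
proof (induction "is")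
  case Nil
  show ?case by (intro allI exI[of _ 0]) simp
next
  case (Cons i "is")
  show ?case
  proof (intro allI)
    fix js :: "'n list" and N :: nat
    obtain C1 where C1: "\<And>w t. norm (w - w0) \<le> 1 \<Longrightarrow>
        (1 + norm t) ^ N * norm (pdl (js @ [i]) (pdlw w is g) t - pdl (js @ [i]) (pdlw w0 is g) t) \<le> C1 * norm (w - w0)"
      using Cons.IH by blast
    obtain C2 where C2: "\<And>w t. norm (w - w0) \<le> 1 \<Longrightarrow>
        (1 + norm t) ^ N * norm (pdl js (pdlw w is g) t - pdl js (pdlw w0 is g) t) \<le> C2 * norm (w - w0)"
      using Cons.IH by blast
    have h0S: "pdlw w0 is g \<in> schwartz" by (rule schwartz_pdlw[OF gS])
    obtain B where B: "\<And>t. (1 + norm t) ^ N * norm (pdl js (pdlw w0 is g) t) \<le> B"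
      using schwartz_rapid[OF h0S, of js] unfolding rapid_def by blast
    define c0 where "c0 = cw w0 i"
    show "\<exists>C. \<forall>w t. norm (w - w0) \<le> 1 \<longrightarrow>
       (1 + norm t) ^ N * norm (pdl js (pdlw w (i # is) g) t - pdl js (pdlw w0 (i # is) g) t) \<le> C * norm (w - w0)"
    proof (intro exI[of _ "C1 + 2 * pi * (B + \<bar>C2\<bar>) + norm c0 * \<bar>C2\<bar>"] allI impI)
      fix w t :: "real^'n" assume wd: "norm (w - w0) \<le> 1"
      define \<delta> where "\<delta> = norm (w - w0)"
      have d0: "0 \<le> \<delta>" and d1: "\<delta> \<le> 1" using wd unfolding \<delta>_def by auto
      have hwS: "pdlw w is g \<in> schwartz" by (rule schwartz_pdlw[OF gS])
      define W where "W = (1 + norm t) ^ N"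
      have W0: "0 \<le> W" unfolding W_def by simp
      define a1 where "a1 = pdl (js @ [i]) (pdlw w is g) t - pdl (js @ [i]) (pdlw w0 is g) t"
      define d2 where "d2 = pdl js (pdlw w is g) t - pdl js (pdlw w0 is g) t"
      define a0 where "a0 = pdl js (pdlw w0 is g) t"
      define dc where "dc = cw w i - cw w0 i"
      have eq: "pdl js (pdlw w (i # is) g) t - pdl js (pdlw w0 (i # is) g) t = a1 + dc * (a0 + d2) + c0 * d2"
        by (simp add: pdl_Dw[OF hwS] pdl_Dw[OF h0S] a1_def d2_def a0_def dc_def c0_def algebra_simps)
      have A1: "W * norm a1 \<le> C1 * \<delta>" using C1[OF wd] unfolding W_def a1_def \<delta>_def .
      have D2: "W * norm d2 \<le> C2 * \<delta>" using C2[OF wd] unfolding W_def d2_def \<delta>_def .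
      have A0: "W * norm a0 \<le> B" using B unfolding W_def a0_def .
      have DC: "norm dc \<le> 2 * pi * \<delta>" unfolding dc_def \<delta>_def by (rule cw_diff)
      have C2d: "C2 * \<delta> \<le> \<bar>C2\<bar>" using d0 d1
        by (metis abs_ge_self abs_mult abs_of_nonneg mult_left_le order_trans abs_ge_zero)
      have C2d': "C2 * \<delta> \<le> \<bar>C2\<bar> * \<delta>" using d0 by (simp add: mult_right_mono)
      have "W * norm (a1 + dc * (a0 + d2) + c0 * d2) \<le> W * (norm a1 + norm dc * (norm a0 + norm d2) + norm c0 * norm d2)"
      proof (rule mult_left_mono[OF _ W0])
        have "norm (a1 + dc * (a0 + d2) + c0 * d2) \<le> norm a1 + norm (dc * (a0 + d2)) + norm (c0 * d2)"
          by (rule order_trans[OF norm_triangle_ineq]) (simp add: norm_triangle_ineq)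
        also have "\<dots> \<le> norm a1 + norm dc * (norm a0 + norm d2) + norm c0 * norm d2"
          by (simp add: norm_mult mult_left_mono norm_triangle_ineq)
        finally show "norm (a1 + dc * (a0 + d2) + c0 * d2) \<le> norm a1 + norm dc * (norm a0 + norm d2) + norm c0 * norm d2" .
      qed
      also have "\<dots> = W * norm a1 + norm dc * (W * norm a0 + W * norm d2) + norm c0 * (W * norm d2)"
        by (simp add: algebra_simps)
      also have "\<dots> \<le> C1 * \<delta> + (2 * pi * \<delta>) * (B + \<bar>C2\<bar>) + norm c0 * (\<bar>C2\<bar> * \<delta>)"
      proof -
        have s1: "W * norm a0 + W * norm d2 \<le> B + \<bar>C2\<bar>" using A0 D2 C2d by linarith
        have s2: "W * norm d2 \<le> \<bar>C2\<bar> * \<delta>" using D2 C2d' by linarith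
        have t1: "norm dc * (W * norm a0 + W * norm d2) \<le> (2 * pi * \<delta>) * (B + \<bar>C2\<bar>)"
          by (rule mult_mono[OF DC s1]) (auto simp: d0 W0)
        have t2: "norm c0 * (W * norm d2) \<le> norm c0 * (\<bar>C2\<bar> * \<delta>)"
          by (rule mult_left_mono[OF s2]) simp
        show ?thesis using A1 t1 t2 by linarith
      qed
      also have "\<dots> = (C1 + 2 * pi * (B + \<bar>C2\<bar>) + norm c0 * \<bar>C2\<bar>) * \<delta>" by (simp add: algebra_simps)
      finally show "(1 + norm t) ^ N * norm (pdl js (pdlw w (i # is) g) t - pdl js (pdlw w0 (i # is) g) t)
          \<le> (C1 + 2 * pi * (B + \<bar>C2\<bar>) + norm c0 * \<bar>C2\<bar>) * norm (w - w0)"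
        unfolding eq W_def \<delta>_def .
    qed
  qed
qed


lemma shift_weight_le:
  fixes t x :: "real^'n::finite"
  assumes "norm x \<le> r" "0 \<le> n"
  shows "(1 + norm t) ^ N * n \<le> (1 + r) ^ N * ((1 + norm (t - x)) ^ N * n)"
proof -
  have "(1 + norm t) ^ N * n \<le> ((1 + norm x) ^ N * (1 + norm (t - x)) ^ N) * n"
    by (rule mult_right_mono[OF weight_shift assms(2)])
  also have "\<dots> \<le> ((1 + r) ^ N * (1 + norm (t - x)) ^ N) * n"
    using assms by (intro mult_right_mono mult_right_mono power_mono) auto
  finally show ?thesis by (simp add: mult.assoc)
qed

lemma abs_aux:
  fixes A B C a b c :: real
  assumes "\<bar>A\<bar> \<le> a" "\<bar>B\<bar> \<le> b" "\<bar>C\<bar> \<le> c" "0 \<le> b" "0 \<le> c"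
  shows "\<bar>A - (B + C) / 2\<bar> \<le> a + b + c"
  using assms by (auto simp: abs_le_iff field_simps)

lemma inner_bound:
  fixes x w x0 w0 t :: "real^'n::finite"
  assumes nx: "norm (x - x0) \<le> \<delta>" and nw: "norm (w - w0) \<le> \<delta>" and d1: "\<delta> \<le> 1"
  shows "\<bar>w \<bullet> (t - (1/2) *\<^sub>R x) - w0 \<bullet> (t - (1/2) *\<^sub>R x0)\<bar> \<le> \<delta> * (norm x0 + norm w0 + 2) * (1 + norm t)"
proof -
  have d0: "0 \<le> \<delta>" using nx norm_ge_zero order_trans by blast
  have e: "w \<bullet> (t - (1/2) *\<^sub>R x) - w0 \<bullet> (t - (1/2) *\<^sub>R x0) = (w - w0) \<bullet> t - ((w - w0) \<bullet> x + w0 \<bullet> (x - x0)) / 2"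
    by (simp add: inner_diff_left inner_diff_right algebra_simps divide_simps)
  have a1: "\<bar>(w - w0) \<bullet> t\<bar> \<le> \<delta> * norm t"
    using Cauchy_Schwarz_ineq2[of "w - w0" t] nw by (meson mult_right_mono norm_ge_zero order_trans)
  have nxb: "norm x \<le> norm x0 + 1"
    using norm_triangle_ineq[of x0 "x - x0"] nx d1 by simp
  have a2: "\<bar>(w - w0) \<bullet> x\<bar> \<le> \<delta> * (norm x0 + 1)"
    using Cauchy_Schwarz_ineq2[of "w - w0" x] nw nxb d0
    by (smt (verit) mult_mono norm_ge_zero)
  have a3: "\<bar>w0 \<bullet> (x - x0)\<bar> \<le> norm w0 * \<delta>"
    using Cauchy_Schwarz_ineq2[of w0 "x - x0"] nx by (meson mult_left_mono norm_ge_zero order_trans)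
  have "\<bar>w \<bullet> (t - (1/2) *\<^sub>R x) - w0 \<bullet> (t - (1/2) *\<^sub>R x0)\<bar> \<le> \<delta> * norm t + \<delta> * (norm x0 + 1) + norm w0 * \<delta>"
  proof -
    have p1: "0 \<le> \<delta> * (norm x0 + 1)" and p2: "0 \<le> norm w0 * \<delta>" using d0 by auto
    show ?thesis unfolding e by (rule abs_aux[OF a1 a2 a3 p1 p2])
  qed
  also have "\<dots> \<le> \<delta> * (norm x0 + norm w0 + 2) * (1 + norm t)"
  proof -
    have "norm t + (norm x0 + 1) + norm w0 \<le> (norm x0 + norm w0 + 2) * (1 + norm t)"
      using mult_nonneg_nonneg[of "norm x0 + norm w0 + 1" "norm t"] by (simp add: algebra_simps)
    then have "\<delta> * (norm t + (norm x0 + 1) + norm w0) \<le> \<delta> * ((norm x0 + norm w0 + 2) * (1 + norm t))"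
      by (rule mult_left_mono[OF _ d0])
    then show ?thesis by (simp add: algebra_simps)
  qed
  finally show ?thesis .
qed


lemma key_lip:
  fixes \<phi> :: "real^'n::finite \<Rightarrow> complex"
  assumes \<phi>S: "\<phi> \<in> schwartz"
  shows "\<exists>K. \<forall>p t. dist p p0 \<le> 1 \<longrightarrow>
     (1 + norm t) ^ N * norm (pdl is (rho p \<phi>) t - pdl is (rho p0 \<phi>) t) \<le> K * dist p p0"
proof -
  obtain x0 w0 where p0: "p0 = (x0, w0)" by (cases p0)
  define h0 where "h0 = pdlw w0 is \<phi>"
  have h0S: "h0 \<in> schwartz" unfolding h0_def by (rule schwartz_pdlw[OF \<phi>S])
  obtain Cpw where Cpw: "\<And>w t. norm (w - w0) \<le> 1 \<Longrightarrow>
      (1 + norm t) ^ N * norm (pdlw w is \<phi> t - h0 t) \<le> Cpw * norm (w - w0)"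
    using pw_lip[OF \<phi>S, of w0 "is"] unfolding h0_def by (metis pdl.simps(1))
  obtain B1 where B1: "\<And>t. (1 + norm t) ^ Suc N * norm (h0 t) \<le> B1"
    using schwartz_rapid0[OF h0S] unfolding rapid_def by blast
  obtain Ctr where Ctr: "\<And>y s. norm y \<le> 1 \<Longrightarrow> (1 + norm s) ^ N * norm (h0 (s - y) - h0 s) \<le> Ctr * norm y"
    using transl_lip[OF h0S, of N] by blast
  define A where "A = norm x0 + norm w0 + 2"
  define K where "K = (2 + norm x0) ^ N * \<bar>Cpw\<bar> + 2 * pi * A * (2 + norm x0) ^ Suc N * \<bar>B1\<bar> + (1 + norm x0) ^ N * \<bar>Ctr\<bar>"
  show ?thesis
  proof (intro exI[of _ K] allI impI)
    fix p :: "(real^'n) \<times> (real^'n)" and t :: "real^'n"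
    assume pd: "dist p p0 \<le> 1"
    obtain x w where p: "p = (x, w)" by (cases p)
    define \<delta> where "\<delta> = dist p p0"
    have d0: "0 \<le> \<delta>" and d1: "\<delta> \<le> 1" using pd unfolding \<delta>_def by auto
    have dd: "\<delta> = norm (x - x0, w - w0)" unfolding \<delta>_def p p0 dist_norm by simp
    have nx: "norm (x - x0) \<le> \<delta>" unfolding dd by (rule norm_fst_le)
    have nw: "norm (w - w0) \<le> \<delta>" unfolding dd by (rule norm_snd_le)
    have nxb: "norm x \<le> 1 + norm x0"
      using norm_triangle_ineq[of x0 "x - x0"] nx d1 by simp
    define hw where "hw = pdlw w is \<phi>"
    define W where "W = (1 + norm t) ^ N"
    have W0: "0 \<le> W" unfolding W_def by simp
    have eq: "pdl is (rho p \<phi>) t - pdl is (rho p0 \<phi>) t =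
        E x w t * (hw (t - x) - h0 (t - x)) + (E x w t - E x0 w0 t) * h0 (t - x) + E x0 w0 t * (h0 (t - x) - h0 (t - x0))"
      unfolding p p0 pdl_rho[OF \<phi>S] rho_eq hw_def h0_def by (simp add: algebra_simps)
    have T1: "W * norm (E x w t * (hw (t - x) - h0 (t - x))) \<le> (2 + norm x0) ^ N * \<bar>Cpw\<bar> * \<delta>"
    proof -
      have "W * norm (E x w t * (hw (t - x) - h0 (t - x))) = W * norm (hw (t - x) - h0 (t - x))"
        by (simp add: norm_mult)
      also have "\<dots> \<le> (1 + (1 + norm x0)) ^ N * ((1 + norm (t - x)) ^ N * norm (hw (t - x) - h0 (t - x)))"
        unfolding W_def by (rule shift_weight_le[OF nxb]) simp
      also have "\<dots> \<le> (2 + norm x0) ^ N * (\<bar>Cpw\<bar> * \<delta>)"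
      proof (rule mult_mono)
        have "(1 + norm (t - x)) ^ N * norm (hw (t - x) - h0 (t - x)) \<le> Cpw * norm (w - w0)"
          unfolding hw_def by (rule Cpw) (use nw d1 in linarith)
        also have "\<dots> \<le> \<bar>Cpw\<bar> * \<delta>" by (intro mult_mono nw) auto
        finally show "(1 + norm (t - x)) ^ N * norm (hw (t - x) - h0 (t - x)) \<le> \<bar>Cpw\<bar> * \<delta>" .
      qed (simp_all add: add.assoc[symmetric])
      finally show ?thesis by (simp add: mult.assoc)
    qed
    have T2: "W * norm ((E x w t - E x0 w0 t) * h0 (t - x)) \<le> 2 * pi * A * (2 + norm x0) ^ Suc N * \<bar>B1\<bar> * \<delta>"
    proof -
      have Ed: "norm (E x w t - E x0 w0 t) \<le> 2 * pi * (\<delta> * A * (1 + norm t))"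
        using order_trans[OF E_diff mult_left_mono[OF inner_bound[OF nx nw d1]]] unfolding A_def by simp
      have "W * norm ((E x w t - E x0 w0 t) * h0 (t - x)) = norm (E x w t - E x0 w0 t) * (W * norm (h0 (t - x)))"
        by (simp add: norm_mult)
      also have "\<dots> \<le> (2 * pi * (\<delta> * A * (1 + norm t))) * (W * norm (h0 (t - x)))"
        by (rule mult_right_mono[OF Ed]) (simp add: W0)
      also have "\<dots> = 2 * pi * \<delta> * A * ((1 + norm t) ^ Suc N * norm (h0 (t - x)))"
        unfolding W_def by (simp add: algebra_simps)
      also have "\<dots> \<le> 2 * pi * \<delta> * A * ((2 + norm x0) ^ Suc N * \<bar>B1\<bar>)"
      proof (rule mult_left_mono)
        have "(1 + norm t) ^ Suc N * norm (h0 (t - x)) \<le> (1 + (1 + norm x0)) ^ Suc N * ((1 + norm (t - x)) ^ Suc N * norm (h0 (t - x)))"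
          by (rule shift_weight_le[OF nxb]) simp
        also have "\<dots> \<le> (2 + norm x0) ^ Suc N * \<bar>B1\<bar>"
          using B1[of "t - x"] by (intro mult_mono) (auto simp: add.assoc[symmetric])
        finally show "(1 + norm t) ^ Suc N * norm (h0 (t - x)) \<le> (2 + norm x0) ^ Suc N * \<bar>B1\<bar>"
          by simp
      qed (simp add: A_def d0)
      finally show ?thesis by (simp add: algebra_simps)
    qed
    have T3: "W * norm (E x0 w0 t * (h0 (t - x) - h0 (t - x0))) \<le> (1 + norm x0) ^ N * \<bar>Ctr\<bar> * \<delta>"
    proof -
      have "W * norm (E x0 w0 t * (h0 (t - x) - h0 (t - x0))) = W * norm (h0 ((t - x0) - (x - x0)) - h0 (t - x0))"
        by (simp add: norm_mult)
      also have "\<dots> \<le> (1 + norm x0) ^ N * ((1 + norm (t - x0)) ^ N * norm (h0 ((t - x0) - (x - x0)) - h0 (t - x0)))"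
        unfolding W_def by (rule shift_weight_le) simp_all
      also have "\<dots> \<le> (1 + norm x0) ^ N * (\<bar>Ctr\<bar> * \<delta>)"
      proof (rule mult_left_mono)
        have "(1 + norm (t - x0)) ^ N * norm (h0 ((t - x0) - (x - x0)) - h0 (t - x0)) \<le> Ctr * norm (x - x0)"
          by (rule Ctr) (use nx d1 in linarith)
        also have "\<dots> \<le> \<bar>Ctr\<bar> * \<delta>" by (intro mult_mono nx) auto
        finally show "(1 + norm (t - x0)) ^ N * norm (h0 ((t - x0) - (x - x0)) - h0 (t - x0)) \<le> \<bar>Ctr\<bar> * \<delta>" .
      qed simp
      finally show ?thesis by (simp add: mult.assoc)
    qed
    have "W * norm (pdl is (rho p \<phi>) t - pdl is (rho p0 \<phi>) t) \<le>
        W * norm (E x w t * (hw (t - x) - h0 (t - x))) + W * norm ((E x w t - E x0 w0 t) * h0 (t - x))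
        + W * norm (E x0 w0 t * (h0 (t - x) - h0 (t - x0)))"
    proof -
      have "norm (pdl is (rho p \<phi>) t - pdl is (rho p0 \<phi>) t) \<le>
        norm (E x w t * (hw (t - x) - h0 (t - x))) + norm ((E x w t - E x0 w0 t) * h0 (t - x))
        + norm (E x0 w0 t * (h0 (t - x) - h0 (t - x0)))"
        unfolding eq by (rule order_trans[OF norm_triangle_ineq]) (simp add: norm_triangle_ineq)
      then have "W * norm (pdl is (rho p \<phi>) t - pdl is (rho p0 \<phi>) t) \<le> W * (norm (E x w t * (hw (t - x) - h0 (t - x))) + norm ((E x w t - E x0 w0 t) * h0 (t - x))
        + norm (E x0 w0 t * (h0 (t - x) - h0 (t - x0))))"
        by (rule mult_left_mono[OF _ W0])
      then show ?thesis by (simp only: distrib_left)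
    qed
    also have "\<dots> \<le> K * \<delta>" using T1 T2 T3 unfolding K_def by (simp add: algebra_simps)
    finally show "(1 + norm t) ^ N * norm (pdl is (rho p \<phi>) t - pdl is (rho p0 \<phi>) t) \<le> K * dist p p0"
      unfolding W_def \<delta>_def .
  qed
qed


lemma finite_L: "finite {is::'n::finite list. length is \<le> N}"
  using finite_lists_length_le[of "UNIV::'n set" N] by simp

lemma seminorm_bound:
  fixes f :: "real^'n::finite \<Rightarrow> complex"
  assumes "\<And>t. (1 + norm t) ^ N * (\<Sum>is\<in>{is::'n list. length is \<le> N}. norm (pdl is f t)) \<le> M"
  shows "sch_seminorm N f \<le> M" and "0 \<le> sch_seminorm N f"
proof -
  show "sch_seminorm N f \<le> M" unfolding sch_seminorm_def by (rule cSUP_least) (auto intro: assms)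
  have bdd: "bdd_above (range (\<lambda>t. (1 + norm t) ^ N * (\<Sum>is\<in>{is::'n list. length is \<le> N}. norm (pdl is f t))))"
    using assms by (intro bdd_aboveI2) 
  have "0 \<le> (1 + norm (0::real^'n)) ^ N * (\<Sum>is\<in>{is::'n list. length is \<le> N}. norm (pdl is f 0))"
    by (intro mult_nonneg_nonneg sum_nonneg) auto
  also have "\<dots> \<le> sch_seminorm N f" unfolding sch_seminorm_def by (rule cSUP_upper[OF _ bdd]) simp
  finally show "0 \<le> sch_seminorm N f" .
qed

lemma cont_rho:
  fixes \<phi> :: "real^'n::finite \<Rightarrow> complex"
  assumes tu: "tempered u" and \<phi>S: "\<phi> \<in> schwartz"
  shows "continuous_on UNIV (\<lambda>p. u (rho p \<phi>))"
proof -
  obtain C N where CN: "\<And>f. f \<in> schwartz \<Longrightarrow> norm (u f) \<le> C * sch_seminorm N f"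
    using tu unfolding tempered_def cont_on_schwartz_def by blast
  have lin: "lin_on_schwartz u" using tu unfolding tempered_def by blast
  define L where "L = {is::'n list. length is \<le> N}"
  have fL: "finite L" unfolding L_def by (rule finite_L)
  show ?thesis unfolding continuous_on_eq_continuous_at[OF open_UNIV]
  proof
    fix p0 :: "(real^'n) \<times> (real^'n)"
    have "\<forall>is. \<exists>K. \<forall>p t. dist p p0 \<le> 1 \<longrightarrow>
       (1 + norm t) ^ N * norm (pdl is (rho p \<phi>) t - pdl is (rho p0 \<phi>) t) \<le> K * dist p p0"
      using key_lip[OF \<phi>S] by blast
    then obtain Kf where Kf: "\<And>is p t. dist p p0 \<le> 1 \<Longrightarrow>
       (1 + norm t) ^ N * norm (pdl is (rho p \<phi>) t - pdl is (rho p0 \<phi>) t) \<le> Kf is * dist p p0"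
      by metis
    define Kt where "Kt = (\<Sum>is\<in>L. \<bar>Kf is\<bar>)"
    have Kt0: "0 \<le> Kt" unfolding Kt_def by (rule sum_nonneg) simp
    have bound: "norm (u (rho p \<phi>) - u (rho p0 \<phi>)) \<le> (\<bar>C\<bar> * Kt) * dist p p0" if pd: "dist p p0 \<le> 1" for p
    proof -
      define \<Delta> where "\<Delta> = (\<lambda>t. 1 * rho p \<phi> t + (- 1) * rho p0 \<phi> t)"
      have r1: "rho p \<phi> \<in> schwartz" and r2: "rho p0 \<phi> \<in> schwartz" using rho_schwartz[OF \<phi>S] by auto
      have \<Delta>S: "\<Delta> \<in> schwartz" unfolding \<Delta>_def by (rule schwartz_lin[OF r1 r2])
      have u\<Delta>: "u \<Delta> = u (rho p \<phi>) - u (rho p0 \<phi>)"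
      proof -
        have "u (\<lambda>x. 1 * rho p \<phi> x + (- 1) * rho p0 \<phi> x) = 1 * u (rho p \<phi>) + (- 1) * u (rho p0 \<phi>)"
          using lin r1 r2 unfolding lin_on_schwartz_def by blast
        then show ?thesis unfolding \<Delta>_def by simp
      qed
      have s1: "smooth_fun (rho p \<phi>)" and s2: "smooth_fun (rho p0 \<phi>)" using r1 r2 by (auto simp: schwartz_iff)
      have pdl\<Delta>: "pdl is \<Delta> t = pdl is (rho p \<phi>) t - pdl is (rho p0 \<phi>) t" for "is" t
        unfolding \<Delta>_def pdl_lin[OF s1 s2] by simp
      have "sch_seminorm N \<Delta> \<le> Kt * dist p p0" and sem0: "0 \<le> sch_seminorm N \<Delta>"
      proof -
        have "(1 + norm t) ^ N * (\<Sum>is\<in>{is::'n list. length is \<le> N}. norm (pdl is \<Delta> t)) \<le> Kt * dist p p0" for t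
        proof -
          have "(1 + norm t) ^ N * (\<Sum>is\<in>L. norm (pdl is \<Delta> t)) = (\<Sum>is\<in>L. (1 + norm t) ^ N * norm (pdl is \<Delta> t))"
            by (rule sum_distrib_left)
          also have "\<dots> \<le> (\<Sum>is\<in>L. \<bar>Kf is\<bar> * dist p p0)"
          proof (rule sum_mono)
            fix "is" assume "is \<in> L"
            have "(1 + norm t) ^ N * norm (pdl is \<Delta> t) \<le> Kf is * dist p p0"
              unfolding pdl\<Delta> by (rule Kf[OF pd])
            also have "\<dots> \<le> \<bar>Kf is\<bar> * dist p p0" by (intro mult_right_mono) auto
            finally show "(1 + norm t) ^ N * norm (pdl is \<Delta> t) \<le> \<bar>Kf is\<bar> * dist p p0" .
          qed
          also have "\<dots> = Kt * dist p p0" unfolding Kt_def by (rule sum_distrib_right[symmetric])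
          finally show ?thesis unfolding L_def .
        qed
        then show "sch_seminorm N \<Delta> \<le> Kt * dist p p0" and "0 \<le> sch_seminorm N \<Delta>"
          by (rule seminorm_bound)+
      qed
      have "norm (u \<Delta>) \<le> C * sch_seminorm N \<Delta>" by (rule CN[OF \<Delta>S])
      also have "\<dots> \<le> \<bar>C\<bar> * sch_seminorm N \<Delta>" using sem0 by (intro mult_right_mono) auto
      also have "\<dots> \<le> \<bar>C\<bar> * (Kt * dist p p0)" by (intro mult_left_mono) (fact, simp)
      finally show ?thesis unfolding u\<Delta> by (simp add: mult.assoc)
    qed
    show "isCont (\<lambda>p. u (rho p \<phi>)) p0"
      unfolding isCont_def
    proof (rule LIM_I)
      fix r :: real assume r: "0 < r"
      define D where "D = \<bar>C\<bar> * Kt + 1"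
      have D: "0 < D" unfolding D_def using Kt0 by (simp add: add_nonneg_pos)
      define s where "s = min 1 (r / D)"
      have s: "0 < s" unfolding s_def using r D by simp
      show "\<exists>s>0. \<forall>p. p \<noteq> p0 \<and> norm (p - p0) < s \<longrightarrow> norm (u (rho p \<phi>) - u (rho p0 \<phi>)) < r"
      proof (intro exI[of _ s] conjI allI impI s)
        fix p assume "p \<noteq> p0 \<and> norm (p - p0) < s"
        then have ps: "dist p p0 < s" by (simp add: dist_norm)
        then have p1: "dist p p0 \<le> 1" unfolding s_def by simp
        have "norm (u (rho p \<phi>) - u (rho p0 \<phi>)) \<le> (\<bar>C\<bar> * Kt) * dist p p0" by (rule bound[OF p1])
        also have "\<dots> \<le> D * dist p p0" unfolding D_def by (intro mult_right_mono) auto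
        also have "\<dots> < D * s" using ps D by simp
        also have "\<dots> \<le> D * (r / D)" unfolding s_def using D by (intro mult_left_mono) auto
        also have "\<dots> = r" using D by simp
        finally show "norm (u (rho p \<phi>) - u (rho p0 \<phi>)) < r" .
      qed
    qed
  qed
qed



lemma lin_scalar:
  assumes "lin_on_schwartz u" "f \<in> schwartz"
  shows "u (\<lambda>x. a * f x) = a * u f"
proof -
  have "u (\<lambda>x. a * f x + 0 * f x) = a * u f + 0 * u f"
    using assms unfolding lin_on_schwartz_def by blast
  then show ?thesis by simp
qed

lemma rho_comp':
  "rho (- fst a, snd a) (rho (- fst b, snd b) g) =
     (\<lambda>t. exp (2 * complex_of_real pi * \<i> * complex_of_real ((snd a \<bullet> (- fst b) - snd b \<bullet> (- fst a)) / 2)) *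
        rho (- fst (a + b), snd (a + b)) g t)"
  by (rule ext) (simp add: rho_comp)

theorem lemma4p3:
  fixes d :: nat
    and T :: "(real^'n::finite \<Rightarrow> complex) \<Rightarrow> ((real^'n \<Rightarrow> complex) \<Rightarrow> complex)"
    and H :: "((real^'n) \<times> (real^'n)) set"
  assumes "d \<ge> 1" and "CARD('n) = 2 * d"
    and "cont_lin_op T"
    and "\<exists>F\<in>schwartz. \<exists>\<phi>\<in>schwartz. T F \<phi> \<noteq> 0"
    and "\<exists>\<Phi> :: (real^'n) \<times> (real^'n) \<Rightarrow> (real^'n) \<times> (real^'n). \<forall>l. \<exists>c::complex.
           \<forall>F\<in>schwartz. \<forall>\<phi>\<in>schwartz. T (rho l F) \<phi> = c * rho_dist (\<Phi> l) (T F) \<phi>"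
    and "H = {\<nu>. \<exists>c::complex. \<forall>F\<in>schwartz. \<forall>\<phi>\<in>schwartz.
                  rho_dist \<nu> (T F) \<phi> = c * T F \<phi>}"
  shows "closed H \<and> 0 \<in> H \<and> (\<forall>a\<in>H. \<forall>b\<in>H. a + b \<in> H) \<and> (\<forall>a\<in>H. - a \<in> H)"
proof -
  have temp: "\<And>F. F \<in> schwartz \<Longrightarrow> tempered (T F)"
    using assms(3) unfolding cont_lin_op_def by blast
  have lin: "\<And>F. F \<in> schwartz \<Longrightarrow> lin_on_schwartz (T F)"
    using temp unfolding tempered_def by blast
  have Hm: "\<nu> \<in> H \<longleftrightarrow> (\<exists>c. \<forall>F\<in>schwartz. \<forall>\<phi>\<in>schwartz. T F (rho (- fst \<nu>, snd \<nu>) \<phi>) = c * T F \<phi>)" for \<nu>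
    using assms(6) unfolding rho_dist_def by simp
  obtain F0 \<phi>0 where F0: "F0 \<in> schwartz" "\<phi>0 \<in> schwartz" "T F0 \<phi>0 \<noteq> 0" using assms(4) by blast
  define a0 where "a0 = T F0 \<phi>0"
  have a0: "a0 \<noteq> 0" using F0 a0_def by simp
  define g where "g F \<phi> \<nu> = T F (rho (- fst \<nu>, snd \<nu>) \<phi>)" for F \<phi> \<nu>
  have gc: "continuous_on UNIV (g F \<phi>)" if "F \<in> schwartz" "\<phi> \<in> schwartz" for F \<phi>
  proof -
    have "continuous_on UNIV (\<lambda>\<nu>::(real^'n) \<times> (real^'n). (- fst \<nu>, snd \<nu>))"
      by (intro continuous_intros)
    then show ?thesis unfolding g_def
      by (rule continuous_on_compose2[OF cont_rho[OF temp[OF that(1)] that(2)]]) auto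
  qed
  have Heq: "H = (\<Inter>F\<in>schwartz. \<Inter>\<phi>\<in>schwartz. {\<nu>. g F \<phi> \<nu> * a0 = g F0 \<phi>0 \<nu> * T F \<phi>})"
  proof (intro set_eqI iffI)
    fix \<nu> assume "\<nu> \<in> H"
    then obtain c where c: "\<forall>F\<in>schwartz. \<forall>\<phi>\<in>schwartz. g F \<phi> \<nu> = c * T F \<phi>"
      unfolding Hm g_def by blast
    then show "\<nu> \<in> (\<Inter>F\<in>schwartz. \<Inter>\<phi>\<in>schwartz. {\<nu>. g F \<phi> \<nu> * a0 = g F0 \<phi>0 \<nu> * T F \<phi>})"
      using F0 unfolding a0_def by auto
  next
    fix \<nu> assume "\<nu> \<in> (\<Inter>F\<in>schwartz. \<Inter>\<phi>\<in>schwartz. {\<nu>. g F \<phi> \<nu> * a0 = g F0 \<phi>0 \<nu> * T F \<phi>})"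
    then have e: "\<forall>F\<in>schwartz. \<forall>\<phi>\<in>schwartz. g F \<phi> \<nu> * a0 = g F0 \<phi>0 \<nu> * T F \<phi>" by blast
    have "\<forall>F\<in>schwartz. \<forall>\<phi>\<in>schwartz. g F \<phi> \<nu> = (g F0 \<phi>0 \<nu> / a0) * T F \<phi>"
      using e a0 by (auto simp: field_simps)
    then show "\<nu> \<in> H" unfolding Hm g_def by blast
  qed
  have closedH: "closed H"
    unfolding Heq
    by (intro closed_INT ballI closed_Collect_eq continuous_intros gc F0) auto
  have zero: "0 \<in> H"
    unfolding Hm by (rule exI[of _ 1]) (simp add: rho_zero[unfolded zero_prod_def])
  have add: "a + b \<in> H" if aH: "a \<in> H" and bH: "b \<in> H" for a b
  proof -
    obtain ca where ca: "\<forall>F\<in>schwartz. \<forall>\<phi>\<in>schwartz. T F (rho (- fst a, snd a) \<phi>) = ca * T F \<phi>"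
      using aH[unfolded Hm] by blast
    obtain cb where cb: "\<forall>F\<in>schwartz. \<forall>\<phi>\<in>schwartz. T F (rho (- fst b, snd b) \<phi>) = cb * T F \<phi>"
      using bH[unfolded Hm] by blast
    define k where "k = exp (2 * complex_of_real pi * \<i> * complex_of_real ((snd a \<bullet> (- fst b) - snd b \<bullet> (- fst a)) / 2))"
    have k: "k \<noteq> 0" unfolding k_def by simp
    show ?thesis unfolding Hm
    proof (intro exI[of _ "ca * cb / k"] ballI)
      fix F \<phi> :: "real^'n \<Rightarrow> complex" assume F: "F \<in> schwartz" and \<phi>: "\<phi> \<in> schwartz"
      have e0: "rho (- fst a, snd a) (rho (- fst b, snd b) \<phi>) = (\<lambda>t. k * rho (- fst (a + b), snd (a + b)) \<phi> t)"
        unfolding k_def by (rule rho_comp')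
      have e: "\<And>t. rho (- fst a, snd a) (rho (- fst b, snd b) \<phi>) t = k * rho (- fst (a + b), snd (a + b)) \<phi> t"
        using fun_cong[OF e0] by simp
      have "rho (- fst (a + b), snd (a + b)) \<phi> = (\<lambda>t. inverse k * rho (- fst a, snd a) (rho (- fst b, snd b) \<phi>) t)"
        by (rule ext) (simp add: e k mult.assoc[symmetric])
      then have "T F (rho (- fst (a + b), snd (a + b)) \<phi>) = inverse k * T F (rho (- fst a, snd a) (rho (- fst b, snd b) \<phi>))"
        using lin_scalar[OF lin[OF F] rho_schwartz[OF rho_schwartz[OF \<phi>]]] by simp
      also have "\<dots> = inverse k * (ca * (cb * T F \<phi>))"
        using ca cb F \<phi> rho_schwartz[OF \<phi>] by simp
      finally show "T F (rho (- fst (a + b), snd (a + b)) \<phi>) = ca * cb / k * T F \<phi>"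
        by (simp add: field_simps)
    qed
  qed
  have neg: "- a \<in> H" if aH: "a \<in> H" for a
  proof -
    obtain ca where ca: "\<forall>F\<in>schwartz. \<forall>\<phi>\<in>schwartz. T F (rho (- fst a, snd a) \<phi>) = ca * T F \<phi>"
      using aH[unfolded Hm] by blast
    define k where "k = exp (2 * complex_of_real pi * \<i> * complex_of_real ((snd a \<bullet> (- fst (- a)) - snd (- a) \<bullet> (- fst a)) / 2))"
    have k: "k \<noteq> 0" unfolding k_def by simp
    have key: "ca * T F (rho (- fst (- a), snd (- a)) \<phi>) = k * T F \<phi>" if F: "F \<in> schwartz" and \<phi>: "\<phi> \<in> schwartz" for F \<phi>
    proof -
      have e0: "rho (- fst a, snd a) (rho (- fst (- a), snd (- a)) \<phi>) = (\<lambda>t. k * rho (- fst (a + - a), snd (a + - a)) \<phi> t)"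
        unfolding k_def by (rule rho_comp')
      have z: "rho (- fst (a + - a), snd (a + - a)) \<phi> = \<phi>"
        using rho_zero[of \<phi>] by (simp add: zero_prod_def)
      have "rho (- fst a, snd a) (rho (- fst (- a), snd (- a)) \<phi>) = (\<lambda>t. k * \<phi> t)"
        using e0 unfolding z .
      moreover have "T F (rho (- fst a, snd a) (rho (- fst (- a), snd (- a)) \<phi>)) = ca * T F (rho (- fst (- a), snd (- a)) \<phi>)"
        using ca F rho_schwartz[OF \<phi>] by blast
      moreover have "T F (\<lambda>t. k * \<phi> t) = k * T F \<phi>" by (rule lin_scalar[OF lin[OF F] \<phi>])
      ultimately show ?thesis by simp
    qed
    have "ca \<noteq> 0"
    proof
      assume "ca = 0"
      then have "k * T F0 \<phi>0 = 0" using key[OF F0(1,2)] by simp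
      then show False using k F0(3) by simp
    qed
    show ?thesis unfolding Hm
    proof (intro exI[of _ "k / ca"] ballI)
      fix F \<phi> :: "real^'n \<Rightarrow> complex" assume "F \<in> schwartz" "\<phi> \<in> schwartz"
      then show "T F (rho (- fst (- a), snd (- a)) \<phi>) = k / ca * T F \<phi>"
        using key \<open>ca \<noteq> 0\<close> by (simp add: field_simps)
    qed
  qed
  show ?thesis using closedH zero add neg by blast
qed


end
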